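(* (a) For all $S\in\{L,R\}^*$, $M(S)\equiv N(S)\pmod 2$. (b) Let $S=S(k_0,\dots,k_m)$ and $S'=S(k'_0,\dots,k'_n)$ be strings, and set $k_i=0$ for $i>m$ and $k'_i=0$ for $i>n$. Then $r(S)<r(S')$ if and only if there is an index $i\geq0$ such that $k_j=k'_j$ for all $j<i$ and either $i$ is even and $k_i<k'_i$, or $i$ is odd and $k_i>k'_i$ (an "alternating lexicographic" ordering of $(k_0,k_1,k_2,\dots)$).
   Context: $\{L,R\}^*$ is the free monoid on $L,R$ (strings), with empty string $\varepsilon$; $|S|$ is the number of symbols of $S$. For $k_0\geq 0$, $k_1,\dots,k_m\geq 1$, $S(k_0,\dots,k_m)$ is the string $R^{k_0}L^{k_1}R^{k_2}\cdots$ with $m+1$ alternating blocks (last block $R^{k_m}$ if $m$ even, $L^{k_m}$ if $m$ odd); each string has exactly one such representation, with $\varepsilon=S(0)$. Define $M(\varepsilon)=0$ and $M(S(k_0,\dots,k_m))=m$ (where $k_m\geq1$ if $m\geq 1$). Define $N(\varepsilon)=0$, $N(SL)=2N(S)+1$, $N(SR)=2N(S)+2$. Define $r(\varepsilon)=1$, $r(SL)=r(S)-2^{-|SL|}$, $r(SR)=r(S)+2^{-|SR|}$. *)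

theory Defs
  imports Complex_Main
begin

datatype sym = L | R

definition mkS :: "nat list \<Rightarrow> sym list" where
  "mkS ks = concat (map (\<lambda>i. replicate (ks ! i) (if even i then R else L)) [0..<length ks])"

definition valid_blocks :: "nat list \<Rightarrow> bool" where
  "valid_blocks ks \<longleftrightarrow> ks \<noteq> [] \<and> (\<forall>i. 1 \<le> i \<longrightarrow> i < length ks \<longrightarrow> 1 \<le> ks ! i)"

definition M :: "sym list \<Rightarrow> nat" where
  "M S = (THE m. \<exists>ks. valid_blocks ks \<and> length ks = Suc m \<and> mkS ks = S)"

text \<open>N and r defined by recursion on appending a symbol at the right end;
  we recurse on the reversed string.\<close>
fun N_rev :: "sym list \<Rightarrow> nat" where
  "N_rev [] = 0"
| "N_rev (L # s) = 2 * N_rev s + 1"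
| "N_rev (R # s) = 2 * N_rev s + 2"

definition N :: "sym list \<Rightarrow> nat" where
  "N S = N_rev (rev S)"

fun r_rev :: "sym list \<Rightarrow> real" where
  "r_rev [] = 1"
| "r_rev (L # s) = r_rev s - (1/2) ^ (length s + 1)"
| "r_rev (R # s) = r_rev s + (1/2) ^ (length s + 1)"

definition r :: "sym list \<Rightarrow> real" where
  "r S = r_rev (rev S)"

definition kext :: "nat list \<Rightarrow> nat \<Rightarrow> nat" where
  "kext ks i = (if i < length ks then ks ! i else 0)"

end

theory Submission
  imports Defs
begin

fun flip :: "sym \<Rightarrow> sym" where "flip L = R" | "flip R = L"

fun w :: "nat list \<Rightarrow> real" where
  "w [] = 1" | "w (k # a) = 2 - (1/2)^k * w a"

definition pos :: "nat list \<Rightarrow> bool" where "pos a \<longleftrightarrow> (\<forall>x\<in>set a. 1 \<le> x)"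

definition AL :: "nat list \<Rightarrow> nat list \<Rightarrow> bool" where
  "AL x y \<longleftrightarrow> (\<exists>i. (\<forall>j<i. kext x j = kext y j) \<and>
             ((even i \<and> kext x i < kext y i) \<or> (odd i \<and> kext x i > kext y i)))"

lemma mkS_Nil: "mkS [] = []" by (simp add: mkS_def)

lemma flip_if: "flip (if even i then R else L) = (if odd i then R else L)"
  by (cases "even i") auto

lemma mkS_Cons: "mkS (k # a) = replicate k R @ map flip (mkS a)"
proof -
  have "[0..<length (k#a)] = 0 # map Suc [0..<length a]"
    by (simp add: upt_conv_Cons map_Suc_upt del: upt_Suc)
  then show ?thesis
    by (simp add: mkS_def map_concat comp_def flip_if del: upt_Suc)
qed

lemma mkS_snoc: "mkS (ks @ [k]) = mkS ks @ replicate k (if even (length ks) then R else L)"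
  apply (simp add: mkS_def)
  apply (rule arg_cong[where f=concat])
  apply (rule map_cong)
   apply (auto simp: nth_append)
  done

lemma r_rev_append: "r_rev (s @ p) = r_rev p + (1/2)^length p * (r_rev s - 1)"
proof (induction s rule: r_rev.induct)
  case 1 then show ?case by simp
next
  case (2 s) then show ?case by (simp add: algebra_simps power_add)
next
  case (3 s) then show ?case by (simp add: algebra_simps power_add)
qed

lemma r_append: "r (P @ T) = r P + (1/2)^length P * (r T - 1)"
  by (simp add: r_def r_rev_append)

lemma r_rev_flip: "r_rev (map flip s) = 2 - r_rev s"
  by (induction s rule: r_rev.induct) auto

lemma r_flip: "r (map flip s) = 2 - r s"
  by (simp add: r_def rev_map r_rev_flip)

lemma r_rep: "r (replicate k R) = 2 - (1/2)^k"
proof -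
  have "r_rev (replicate k R) = 2 - (1/2)^k" by (induction k) auto
  then show ?thesis by (simp add: r_def)
qed

lemma r_mkS: "r (mkS ks) = w ks"
proof (induction ks)
  case Nil then show ?case by (simp add: mkS_Nil r_def)
next
  case (Cons k a)
  show ?case by (simp add: mkS_Cons r_append r_flip r_rep Cons algebra_simps)
qed

lemma wb: "pos a \<Longrightarrow> 1 \<le> w a \<and> w a < 2 \<and> (a \<noteq> [] \<longrightarrow> 1 < w a)"
proof (induction a)
  case Nil then show ?case by simp
next
  case (Cons k a)
  then have k: "1 \<le> k" and p: "pos a" by (auto simp: pos_def)
  from Cons.IH[OF p] have h: "1 \<le> w a" "w a < 2" by auto
  have "(1/2::real)^k \<le> (1/2)^1" using k by (intro power_decreasing) auto
  moreover have "(1/2::real)^k * w a < (1/2)^k * 2" using h by simp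
  moreover have "(1/2::real)^k * 2 \<le> 1" using calculation(1) by simp
  ultimately have "(1/2::real)^k * w a < 1" by linarith
  moreover have "0 < (1/2::real)^k * w a" using h by simp
  ultimately show ?case by simp
qed

lemma cons_less:
  assumes "1 \<le> w a" "w a < 2" "1 \<le> w a'" "w a' < 2"
  shows "w (k # a) < w (k' # a') \<longleftrightarrow> k < k' \<or> (k = k' \<and> w a' < w a)"
proof -
  have key: "(1/2::real)^q * w b < (1/2)^p * w c" if pq: "p < q" "1 \<le> w c" "w b < 2" for p q b c
  proof -
    obtain m where qm: "q = Suc m" using pq by (cases q) auto
    have "(1/2::real)^q * 2 = (1/2)^(q - 1)" unfolding qm by simp
    moreover have "(1/2::real)^(q-1) \<le> (1/2)^p" using that(1) by (intro power_decreasing) auto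
    moreover have "(1/2::real)^q * w b < (1/2)^q * 2" using that by simp
    moreover have "(1/2::real)^p \<le> (1/2)^p * w c" using that by simp
    ultimately show ?thesis by linarith
  qed
  show ?thesis
  proof (cases k k' rule: linorder_cases)
    case less then show ?thesis using key[OF less, of a a'] assms by simp
  next
    case greater then show ?thesis using key[OF greater, of a' a] assms by simp
  next
    case equal then show ?thesis by simp
  qed
qed

lemma kext_Cons0: "kext (k # a) 0 = k" by (simp add: kext_def)
lemma kext_ConsS: "kext (k # a) (Suc j) = kext a j" by (simp add: kext_def)
lemma kext_Nil: "kext [] j = 0" by (simp add: kext_def)

lemma AL_cons: "AL (k # a) (k' # a') \<longleftrightarrow> k < k' \<or> (k = k' \<and> AL a' a)"
proof
  assume "AL (k # a) (k' # a')"
  then obtain i where i: "\<forall>j<i. kext (k#a) j = kext (k'#a') j"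
    "(even i \<and> kext (k#a) i < kext (k'#a') i) \<or> (odd i \<and> kext (k#a) i > kext (k'#a') i)"
    unfolding AL_def by blast
  show "k < k' \<or> (k = k' \<and> AL a' a)"
  proof (cases i)
    case 0 then show ?thesis using i by (simp add: kext_Cons0)
  next
    case (Suc j)
    have "k = k'" using i(1) Suc by (metis kext_Cons0 zero_less_Suc)
    moreover have "\<forall>j'<j. kext a' j' = kext a j'" using i(1) Suc by (metis Suc_mono kext_ConsS)
    moreover have "(even j \<and> kext a' j < kext a j) \<or> (odd j \<and> kext a' j > kext a j)"
      using i(2) Suc by (auto simp: kext_ConsS)
    ultimately show ?thesis unfolding AL_def by blast
  qed
next
  assume h: "k < k' \<or> (k = k' \<and> AL a' a)"
  show "AL (k # a) (k' # a')"
  proof (cases "k < k'")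
    case True then show ?thesis unfolding AL_def
      by (intro exI[of _ 0]) (simp add: kext_Cons0)
  next
    case False
    with h have e: "k = k'" and "AL a' a" by auto
    then obtain j where j: "\<forall>j'<j. kext a' j' = kext a j'"
      "(even j \<and> kext a' j < kext a j) \<or> (odd j \<and> kext a' j > kext a j)"
      unfolding AL_def by blast
    have "\<forall>i<Suc j. kext (k#a) i = kext (k'#a') i"
    proof (intro allI impI)
      fix i assume "i < Suc j"
      then show "kext (k#a) i = kext (k'#a') i" using j(1) e
        by (cases i) (auto simp: kext_Cons0 kext_ConsS)
    qed
    moreover have "(even (Suc j) \<and> kext (k#a) (Suc j) < kext (k'#a') (Suc j)) \<or>
        (odd (Suc j) \<and> kext (k#a) (Suc j) > kext (k'#a') (Suc j))"
      using j(2) by (auto simp: kext_ConsS)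
    ultimately show ?thesis unfolding AL_def by blast
  qed
qed

lemma AL_nil_nil: "\<not> AL [] []" by (simp add: AL_def kext_Nil)

lemma AL_nil_cons: "0 < k' \<Longrightarrow> AL [] (k' # a')"
  unfolding AL_def by (intro exI[of _ 0]) (simp add: kext_Cons0 kext_Nil)

lemma AL_cons_nil: "0 < k \<Longrightarrow> \<not> AL (k # a) []"
  unfolding AL_def
proof
  assume "0 < k" "\<exists>i. (\<forall>j<i. kext (k # a) j = kext [] j) \<and>
       (even i \<and> kext (k # a) i < kext [] i \<or> odd i \<and> kext [] i < kext (k # a) i)"
  then obtain i where i: "\<forall>j<i. kext (k # a) j = kext [] j"
    "even i \<and> kext (k # a) i < kext [] i \<or> odd i \<and> kext [] i < kext (k # a) i" by blast
  show False
  proof (cases i)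
    case 0 then show ?thesis using i by (simp add: kext_Nil)
  next
    case (Suc j) then show ?thesis using i(1) \<open>0<k\<close> by (auto simp: kext_Cons0 kext_Nil)
  qed
qed

lemma main: "pos a \<Longrightarrow> pos a' \<Longrightarrow> (w a < w a' \<longleftrightarrow> AL a a') \<and> (w a' < w a \<longleftrightarrow> AL a' a)"
proof (induction a arbitrary: a')
  case Nil
  show ?case
  proof (cases a')
    case Nil then show ?thesis by (simp add: AL_nil_nil)
  next
    case (Cons k' b')
    then have "1 < w a'" "0 < k'" using wb[OF Nil.prems(2)] Nil.prems(2) by (auto simp: pos_def)
    then show ?thesis using Cons AL_nil_cons AL_cons_nil by simp
  qed
next
  case (Cons k b)
  note IHo = Cons.IH
  have pb: "pos b" and k: "0 < k" using Cons.prems by (auto simp: pos_def)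
  have w1: "1 < w (k # b)" using wb[OF Cons.prems(1)] by simp
  show ?case
  proof (cases a')
    case Nil then show ?thesis using w1 k AL_nil_cons AL_cons_nil by simp
  next
    case (Cons k' b')
    have pb': "pos b'" using Cons \<open>pos a'\<close> by (auto simp: pos_def)
    note IH = IHo[OF pb pb']
    note B = wb[OF pb] wb[OF pb']
    show ?thesis unfolding Cons
      using cons_less[of b b' k k'] cons_less[of b' b k' k] IH B AL_cons by auto
  qed
qed

lemma w_inj: "pos a \<Longrightarrow> pos a' \<Longrightarrow> w a = w a' \<Longrightarrow> a = a'"
proof (induction a arbitrary: a')
  case Nil then show ?case using wb[of a'] by (cases a') auto
next
  case (Cons k b)
  note IHo = Cons.IH and P = Cons.prems
  have pb: "pos b" using Cons.prems by (auto simp: pos_def)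
  show ?case
  proof (cases a')
    case Nil then show ?thesis using wb[OF Cons.prems(1)] Cons.prems by auto
  next
    case (Cons k' b')
    have pb': "pos b'" using Cons \<open>pos a'\<close> by (auto simp: pos_def)
    note B = wb[OF pb] wb[OF pb']
    have "k = k' \<and> w b = w b'"
    proof (cases k k' rule: linorder_cases)
      case less then show ?thesis using cons_less[of b b' k k'] B P(3) Cons by auto
    next
      case greater then show ?thesis using cons_less[of b' b k' k] B P(3) Cons by auto
    next
      case equal then show ?thesis using P(3) Cons by simp
    qed
    then show ?thesis using IHo[OF pb pb'] Cons by simp
  qed
qed

lemma valid_split: "valid_blocks ks \<Longrightarrow> ks = hd ks # tl ks \<and> pos (tl ks)"
  unfolding valid_blocks_def
proof -
  assume v: "ks \<noteq> [] \<and> (\<forall>i. 1 \<le> i \<longrightarrow> i < length ks \<longrightarrow> 1 \<le> ks ! i)"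
  then obtain k a where ka: "ks = k # a" by (cases ks) auto
  have "1 \<le> x" if "x \<in> set a" for x
  proof -
    obtain j where "j < length a" "x = a ! j" using \<open>x \<in> set a\<close> by (auto simp: in_set_conv_nth)
    moreover have "1 \<le> ks ! Suc j" using v ka \<open>j < length a\<close> by (intro v[THEN conjunct2, rule_format]) auto
    ultimately show ?thesis using ka by simp
  qed
  then show ?thesis using ka by (auto simp: pos_def)
qed

lemma mkS_inj: "valid_blocks ks \<Longrightarrow> valid_blocks ks' \<Longrightarrow> mkS ks = mkS ks' \<Longrightarrow> ks = ks'"
proof -
  assume v: "valid_blocks ks" "valid_blocks ks'" and e: "mkS ks = mkS ks'"
  obtain k a where ka: "ks = k # a" "pos a" using valid_split[OF v(1)] by blast
  obtain k' a' where ka': "ks' = k' # a'" "pos a'" using valid_split[OF v(2)] by blast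
  have "w (k#a) = w (k'#a')" using e ka ka' r_mkS by metis
  then have "k = k' \<and> w a = w a'"
  proof (cases k k' rule: linorder_cases)
    case less then show ?thesis using cons_less[of a a' k k'] wb[OF ka(2)] wb[OF ka'(2)] \<open>w (k#a) = w (k'#a')\<close> by auto
  next
    case greater then show ?thesis using cons_less[of a' a k' k] wb[OF ka(2)] wb[OF ka'(2)] \<open>w (k#a) = w (k'#a')\<close> by auto
  next
    case equal then show ?thesis using \<open>w (k#a) = w (k'#a')\<close> by simp
  qed
  then show ?thesis using w_inj[OF ka(2) ka'(2)] ka ka' by simp
qed

lemma N_snocL: "N (S @ [L]) = 2 * N S + 1" by (simp add: N_def)
lemma N_snocR: "N (S @ [R]) = 2 * N S + 2" by (simp add: N_def)

lemma exist: "\<exists>ks. valid_blocks ks \<and> mkS ks = S \<and> (length ks - 1) mod 2 = N S mod 2"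
proof (induction S rule: rev_induct)
  case Nil
  show ?case by (intro exI[of _ "[0]"]) (simp add: valid_blocks_def mkS_def N_def)
next
  case (snoc x S)
  then obtain ks where ks: "valid_blocks ks" "mkS ks = S" "(length ks - 1) mod 2 = N S mod 2" by blast
  then obtain b k where bk: "ks = b @ [k]" unfolding valid_blocks_def by (metis rev_exhaust)
  have vb: "\<forall>i. 1 \<le> i \<longrightarrow> i < length b \<longrightarrow> 1 \<le> b ! i" using ks(1) bk
    unfolding valid_blocks_def by (auto simp: nth_append)
  have v1: "valid_blocks (b @ [Suc k])" using vb unfolding valid_blocks_def
    by (auto simp: nth_append)
  have v2: "valid_blocks (b @ [k, 1])" using vb ks(1) bk unfolding valid_blocks_def
    by (auto simp: nth_append nth_Cons split: nat.splits)
  have m1: "mkS (b @ [Suc k]) = S @ [if even (length b) then R else L]"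
  proof -
    have S: "S = mkS b @ replicate k (if even (length b) then R else L)"
      using ks(2) bk mkS_snoc by simp
    show ?thesis unfolding S mkS_snoc by (simp add: replicate_append_same)
  qed
  have m2: "mkS (b @ [k, 1]) = S @ [if even (length b) then L else R]"
    using ks(2) bk mkS_snoc[of "b @ [k]" 1] by simp
  show ?case
  proof (cases "even (length b)"; cases x)
    assume "even (length b)" "x = R"
    then show ?thesis using v1 m1 by (intro exI[of _ "b @ [Suc k]"]) (auto simp: N_snocR)
  next
    assume "even (length b)" "x = L"
    then show ?thesis using v2 m2 by (intro exI[of _ "b @ [k, 1]"]) (auto simp: N_snocL)
  next
    assume "odd (length b)" "x = L"
    then show ?thesis using v1 m1 by (intro exI[of _ "b @ [Suc k]"]) (auto simp: N_snocL odd_iff_mod_2_eq_one)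
  next
    assume "odd (length b)" "x = R"
    then show ?thesis using v2 m2 by (intro exI[of _ "b @ [k, 1]"]) (auto simp: N_snocR)
  qed
qed

theorem corollary3:
  shows "(\<forall>S. M S mod 2 = N S mod 2) \<and>
    (\<forall>ks ks'. valid_blocks ks \<longrightarrow> valid_blocks ks' \<longrightarrow>
      (r (mkS ks) < r (mkS ks') \<longleftrightarrow>
        (\<exists>i. (\<forall>j<i. kext ks j = kext ks' j) \<and>
             ((even i \<and> kext ks i < kext ks' i) \<or> (odd i \<and> kext ks i > kext ks' i)))))"
proof (intro conjI allI impI)
  fix S
  obtain ks where ks: "valid_blocks ks" "mkS ks = S" "(length ks - 1) mod 2 = N S mod 2"
    using exist by blast
  have "M S = length ks - 1"
    unfolding M_def
  proof (rule the_equality)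
    show "\<exists>ks'. valid_blocks ks' \<and> length ks' = Suc (length ks - 1) \<and> mkS ks' = S"
      using ks valid_split[OF ks(1)] by (intro exI[of _ ks]) (metis One_nat_def diff_Suc_1 length_Cons)
  next
    fix m assume "\<exists>ks'. valid_blocks ks' \<and> length ks' = Suc m \<and> mkS ks' = S"
    then obtain ks' where "valid_blocks ks'" "length ks' = Suc m" "mkS ks' = S" by blast
    then show "m = length ks - 1" using mkS_inj[OF ks(1)] ks(2) by auto
  qed
  then show "M S mod 2 = N S mod 2" using ks(3) by simp
next
  fix ks ks' assume v: "valid_blocks ks" "valid_blocks ks'"
  obtain k a where ka: "ks = k # a" "pos a" using valid_split[OF v(1)] by blast
  obtain k' a' where ka': "ks' = k' # a'" "pos a'" using valid_split[OF v(2)] by blast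
  have "r (mkS ks) < r (mkS ks') \<longleftrightarrow> AL ks ks'"
    unfolding r_mkS ka(1) ka'(1) AL_cons
    using cons_less[of a a' k k'] wb[OF ka(2)] wb[OF ka'(2)] main[OF ka(2) ka'(2)] by auto
  then show "r (mkS ks) < r (mkS ks') \<longleftrightarrow>
        (\<exists>i. (\<forall>j<i. kext ks j = kext ks' j) \<and>
             ((even i \<and> kext ks i < kext ks' i) \<or> (odd i \<and> kext ks i > kext ks' i)))"
    unfolding AL_def .
qed

end
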